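(* Let $H\ge 1$, $S\ge1$, let $D=[d_{\theta s}]\in\mathbb{R}^{H\times S}$, let $x_k=[x_{1k},\ldots,x_{Sk}]^\top\in\mathbb{R}^S$ have strictly positive entries summing to $1$, and let $\theta^\star_k\in\{1,\ldots,H\}$ be the unique minimizer of $\theta\mapsto\sum_{s=1}^S d_{\theta s}x_{sk}$. Define $B_k=(\mathbb{1}_He_{\theta^\star_k}^\top-I_H)D$, $C_k=\begin{bmatrix}B_k\\ \mathbb{1}_S^\top\end{bmatrix}\in\mathbb{R}^{(H+1)\times S}$, $y_k=B_kx_k\in\mathbb{R}^H$ (so $y_k(\theta)=\sum_{s}(d_{\theta^\star_k s}-d_{\theta s})x_{sk}$) and $\tilde y_k=\begin{bmatrix}y_k\\1\end{bmatrix}$. Then the constrained system "find $\tilde x_k\in\mathbb{R}^S$ with $\tilde y_k=C_k\tilde x_k$ and all entries of $\tilde x_k$ strictly positive" admits a unique solution if and only if $\mathrm{rank}(C_k)=S$. Consequently, a necessary condition for this system to have a unique solution is $H\ge S$.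
   Context: Interpretation: in a weakly-connected network with $S$ sending sub-networks that are internally homogeneous (all agents in sending sub-network $s$ have the same true distribution $f^{(s)}$ and the same likelihoods $L^{(s)}(\theta)$, $\theta\in\{1,\ldots,H\}$), $d_{\theta s}=D[f^{(s)}\|L^{(s)}(\theta)]$ is the KL divergence, $x_{sk}$ is the aggregate limiting weight from sending sub-network $s$ to receiving agent $k$, and $y_k$ is the vector of limiting normalized log-beliefs at agent $k$; recovering $x_k$ from $y_k$ (with $D$ known) is the topology learning problem. $e_m$ denotes the $m$-th canonical basis vector of $\mathbb{R}^H$, $\mathbb{1}_L$ the all-ones vector of length $L$. *)

theory Defs
  imports "HOL-Analysis.Analysis"
begin

text \<open>Rows of D are indexed by a finite type 'h (H = CARD('h)), columns by 's (S = CARD('s)).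
  The augmented matrix C_k has H+1 rows, indexed by 'h option: Some i is row i of B_k,
  None is the extra all-ones row.\<close>

definition Bmat :: "real^'s^'h \<Rightarrow> 'h \<Rightarrow> real^'s^'h" where
  "Bmat D th = ((\<chi> i j. if j = th then 1 else 0) - mat 1) ** D"

definition Cmat :: "real^'s^'h \<Rightarrow> 'h \<Rightarrow> real^'s^('h option)" where
  "Cmat D th = (\<chi> r. case r of Some i \<Rightarrow> Bmat D th $ i | None \<Rightarrow> (\<chi> s. 1))"

definition ytilde :: "real^'s^'h \<Rightarrow> 'h \<Rightarrow> real^'s \<Rightarrow> real^('h option)" where
  "ytilde D th x = (\<chi> r. case r of Some i \<Rightarrow> (Bmat D th *v x) $ i | None \<Rightarrow> 1)"

end

theory Submission
  imports Defs
begin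

lemma B_row_th: "Bmat D th $ th = 0"
proof -
  have "Bmat D th $ th $ j = 0" for j
  proof -
    have "Bmat D th $ th $ j = (\<Sum>k\<in>UNIV. ((if k = th then 1 else 0) - (if th = k then 1 else 0)) * D $ k $ j)"
      by (simp add: Bmat_def matrix_matrix_mult_def mat_def)
    also have "\<dots> = 0" by (rule sum.neutral) auto
    finally show ?thesis .
  qed
  then show ?thesis by (simp add: vec_eq_iff)
qed

lemma yt_eq: "(\<Sum>s\<in>UNIV. x $ s) = 1 \<Longrightarrow> ytilde D th x = Cmat D th *v x"
  by (auto simp: vec_eq_iff ytilde_def Cmat_def matrix_vector_mult_def split: option.splits)

lemma rank_le:
  fixes D :: "real^'s^'h"
  shows "rank (Cmat D th) \<le> CARD('h)"
proof -
  let ?C = "Cmat D th"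
  define W where "W = (\<lambda>r. row r ?C) ` (UNIV - {Some th})"
  have z: "row (Some th) ?C = 0"
    using B_row_th[of D th] by (simp add: row_def Cmat_def vec_eq_iff)
  have "rows ?C \<subseteq> span W"
  proof
    fix v assume "v \<in> rows ?C"
    then obtain r where r: "v = row r ?C" by (auto simp: rows_def)
    show "v \<in> span W"
    proof (cases "r = Some th")
      case True then show ?thesis using r z by (simp add: span_zero)
    next
      case False then show ?thesis using r by (auto simp: W_def intro: span_base)
    qed
  qed
  moreover have "finite W" by (simp add: W_def)
  ultimately have "dim (rows ?C) \<le> card W" by (rule dim_le_card)
  also have "card W \<le> card (UNIV - {Some th} :: 'h option set)"
    unfolding W_def by (rule card_image_le) simp
  also have "\<dots> = CARD('h)" by (simp add: card_Diff_singleton)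
  finally show ?thesis by (simp add: row_rank_def)
qed

lemma uniq_iff:
  fixes A :: "real^'s^'m" and x :: "real^'s"
  assumes pos: "\<forall>s. x $ s > 0"
  shows "(\<exists>!xt. A *v x = A *v xt \<and> (\<forall>s. xt $ s > 0)) \<longleftrightarrow> (\<forall>v. A *v v = 0 \<longrightarrow> v = 0)"
proof
  assume u: "\<exists>!xt. A *v x = A *v xt \<and> (\<forall>s. xt $ s > 0)"
  show "\<forall>v. A *v v = 0 \<longrightarrow> v = 0"
  proof (intro allI impI, rule ccontr)
    fix v assume Av: "A *v v = 0" and nz: "v \<noteq> 0"
    define m where "m = Min (range (\<lambda>s. x $ s))"
    have mpos: "m > 0" unfolding m_def using pos by (subst Min_gr_iff) auto
    have mle: "m \<le> x $ s" for s unfolding m_def by (rule Min_le) auto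
    define e where "e = m / (norm v + 1)"
    have epos: "e > 0" unfolding e_def using mpos by (intro divide_pos_pos) (auto intro: add_nonneg_pos)
    have "x $ s + e * v $ s > 0" for s
    proof -
      have "\<bar>v $ s\<bar> \<le> norm v" by (rule component_le_norm_cart)
      hence "e * \<bar>v $ s\<bar> \<le> e * norm v" using epos by simp
      also have "e * norm v < m"
      proof -
        have np: "norm v + 1 > 0" by (simp add: add_nonneg_pos)
        have "m * norm v / (norm v + 1) < m" unfolding pos_divide_less_eq[OF np]
          using mpos by (simp add: distrib_left)
        thus ?thesis by (simp only: e_def times_divide_eq_left)
      qed
      finally have "e * \<bar>v $ s\<bar> < x $ s" using mle[of s] by simp
      moreover have "- (e * \<bar>v $ s\<bar>) \<le> e * v $ s"
      proof -
        have "\<bar>e * v $ s\<bar> = e * \<bar>v $ s\<bar>" using epos by (simp add: abs_mult)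
        thus ?thesis using abs_ge_minus_self[of "e * v $ s"] by linarith
      qed
      ultimately show ?thesis by linarith
    qed
    moreover have "A *v x = A *v (x + e *s v)"
      by (simp add: matrix_vector_right_distrib Av vector_scalar_commute)
    ultimately have "A *v x = A *v (x + e *s v) \<and> (\<forall>s. (x + e *s v) $ s > 0)" by simp
    moreover have "A *v x = A *v x \<and> (\<forall>s. x $ s > 0)" using pos by simp
    ultimately have "x + e *s v = x" using u by blast
    hence "e *s v = 0" by (simp add: vec_eq_iff)
    thus False using epos nz by (simp add: vec_eq_iff)
  qed
next
  assume k: "\<forall>v. A *v v = 0 \<longrightarrow> v = 0"
  show "\<exists>!xt. A *v x = A *v xt \<and> (\<forall>s. xt $ s > 0)"
  proof (rule ex1I[of _ x])
    show "A *v x = A *v x \<and> (\<forall>s. x $ s > 0)" using pos by simp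
  next
    fix y assume "A *v x = A *v y \<and> (\<forall>s. y $ s > 0)"
    hence "A *v (y - x) = 0" by (simp add: matrix_vector_mult_diff_distrib)
    thus "y = x" using k by auto
  qed
qed

theorem lemma1:
  fixes D :: "real^'s^'h" and x :: "real^'s" and th :: 'h
  assumes pos: "\<forall>s. x $ s > 0"
    and sum1: "(\<Sum>s\<in>UNIV. x $ s) = 1"
    and argmin: "\<forall>t. t \<noteq> th \<longrightarrow> (\<Sum>s\<in>UNIV. D $ th $ s * x $ s) < (\<Sum>s\<in>UNIV. D $ t $ s * x $ s)"
  shows "((\<exists>!xt::real^'s. ytilde D th x = Cmat D th *v xt \<and> (\<forall>s. xt $ s > 0))
            \<longleftrightarrow> rank (Cmat D th) = CARD('s))
         \<and> ((\<exists>!xt::real^'s. ytilde D th x = Cmat D th *v xt \<and> (\<forall>s. xt $ s > 0))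
            \<longrightarrow> CARD('h) \<ge> CARD('s))"
proof -
  have e: "(\<exists>!xt::real^'s. ytilde D th x = Cmat D th *v xt \<and> (\<forall>s. xt $ s > 0))
            \<longleftrightarrow> rank (Cmat D th) = CARD('s)"
    unfolding yt_eq[OF sum1] uniq_iff[OF pos] using matrix_nonfull_linear_equations_eq[of "Cmat D th"]
    by blast
  show ?thesis using e rank_le[of D th] by auto
qed

end
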